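(* For all integers $m>0$ and $k\in\mathbb Z$, \[ \Psi^\pm_{k+m}(x)=\pm\beta\,\frac{\partial}{\partial s_m}\Psi^\pm_k(x). \]
   Context: Let $G(z)=1+\sum_{i\ge1}g_iz^i$ be a formal power series, $\beta,\gamma$ formal parameters, ${\bf s}=(s_1,s_2,\dots)$ independent variables (derivatives $\partial/\partial s_m$ act coefficientwise). With $r_\lambda=\prod_{(i,j)\in\lambda}G((j-i)\beta)$ (boxes $(i,j)$, $i$ = row, $j$ = column) and Schur functions in ${\bf t}$ with $p_i=it_i$, let $\tau({\bf t})=\sum_\lambda\gamma^{|\lambda|}r_\lambda s_\lambda({\bf t})s_\lambda(\beta^{-1}{\bf s})$ and $\Psi_0^\pm(x)=\tau(\pm[x])$, $[x]=(x,x^2/2,\dots)$. $D=x\,d/dx$; $R_\pm=\gamma xG(\pm\beta D)$ acts on formal Laurent series in $x$ by $R_\pm(x^j)=\gamma G(\pm\beta j)x^{j+1}$ and is invertible; $\Psi^\pm_k=R_\pm^k\Psi^\pm_0$ for $k\in\mathbb Z$. *)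

theory Defs
  imports "HOL-Library.Poly_Mapping"
          "HOL-Computational_Algebra.Formal_Laurent_Series"
          "HOL-Computational_Algebra.Polynomial"
          "HOL-Combinatorics.Permutations"
begin

section \<open>Polynomials in the infinitely many variables t_1, t_2, ... (index 0 unused)\<close>

type_synonym 'a mvpoly = "(nat \<Rightarrow>\<^sub>0 nat) \<Rightarrow>\<^sub>0 'a"

text \<open>Complete homogeneous functions h_n(t), defined by
  exp(sum_{i>=1} t_i z^i) = sum_n h_n(t) z^n, i.e.
  h_n(t) = sum over (k_1,k_2,...) with sum i*k_i = n of prod t_i^{k_i}/k_i!.\<close>
definition hfun :: "int \<Rightarrow> rat mvpoly" where
  "hfun n = (if n < 0 then 0 else
     (\<Sum>a \<in> {a :: nat \<Rightarrow>\<^sub>0 nat. 0 \<notin> Poly_Mapping.keys a \<and>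
                 (\<Sum>i\<in>Poly_Mapping.keys a. i * Poly_Mapping.lookup a i) = nat n}.
        Poly_Mapping.single a (1 / of_nat (\<Prod>i\<in>Poly_Mapping.keys a. fact (Poly_Mapping.lookup a i)))))"

definition is_partition :: "nat list \<Rightarrow> bool" where
  "is_partition lam \<longleftrightarrow> sorted_wrt (\<ge>) lam \<and> (\<forall>x\<in>set lam. 0 < x)"

text \<open>Schur function s_lambda(t) via Jacobi--Trudi: det (h_{lambda_i - i + j}) (Leibniz formula).\<close>
definition schur :: "nat list \<Rightarrow> rat mvpoly" where
  "schur lam = (let l = length lam in
     \<Sum>p | p permutes {..<l}. of_int (sign p) *
        (\<Prod>i<l. hfun (int (lam ! i) - int i + int (p i))))"

definition evalp :: "(rat \<Rightarrow> 'r::comm_ring_1) \<Rightarrow> (nat \<Rightarrow> 'r) \<Rightarrow> rat mvpoly \<Rightarrow> 'r" where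
  "evalp emb tv p = (\<Sum>a\<in>Poly_Mapping.keys p.
      emb (Poly_Mapping.lookup p a) * (\<Prod>i\<in>Poly_Mapping.keys a. tv i ^ Poly_Mapping.lookup a i))"

section \<open>The data: beta = fls_X (Laurent series in beta over a field 'k of characteristic 0)\<close>

definition Gat :: "'k::field_char_0 fps \<Rightarrow> int \<Rightarrow> 'k fls" where
  "Gat G c = fps_to_fls (G oo (fps_const (of_int c) * fps_X))"

text \<open>r_lambda = prod over boxes (i,j) (row i, column j, 1-based) of G((j-i) beta).\<close>
definition rlam :: "'k::field_char_0 fps \<Rightarrow> nat list \<Rightarrow> 'k fls" where
  "rlam G lam = (\<Prod>i<length lam. \<Prod>j<lam ! i. Gat G (int j - int i))"

text \<open>s_lambda(eps [x]) with [x]_i = x^i / i, as a rational polynomial in x.\<close>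
definition schur_x :: "int \<Rightarrow> nat list \<Rightarrow> rat poly" where
  "schur_x eps lam = evalp (\<lambda>q. [:q:]) (\<lambda>i. Polynomial.monom (of_int eps / of_nat i) i) (schur lam)"

text \<open>s_lambda(beta^{-1} s) as a polynomial in s_1, s_2, ... with coefficients in 'k fls.\<close>
definition schur_s :: "nat list \<Rightarrow> ('k::field_char_0 fls) mvpoly" where
  "schur_s lam = evalp (\<lambda>q. Poly_Mapping.single 0 (fls_const (of_rat q)))
      (\<lambda>i. Poly_Mapping.single (Poly_Mapping.single i 1) fls_X_inv) (schur lam)"

text \<open>Objects: formal Laurent series in x whose coefficients are polynomials in s;
  F j a is the coefficient of x^j s^a.\<close>
type_synonym 'k xser = "int \<Rightarrow> (nat \<Rightarrow>\<^sub>0 nat) \<Rightarrow> 'k fls"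

definition tau_term :: "'k::field_char_0 fps \<Rightarrow> 'k \<Rightarrow> int \<Rightarrow> nat list \<Rightarrow> int \<Rightarrow> (nat \<Rightarrow>\<^sub>0 nat) \<Rightarrow> 'k fls" where
  "tau_term G gam eps lam j a =
     fls_const (gam ^ sum_list lam) * rlam G lam *
     fls_const (of_rat (if j < 0 then 0 else poly.coeff (schur_x eps lam) (nat j))) *
     Poly_Mapping.lookup (schur_s lam) a"

text \<open>Psi_0^eps(x) = tau(eps [x]) (the formally convergent sum over all partitions,
  written as the sum over the support).\<close>
definition Psi0 :: "'k::field_char_0 fps \<Rightarrow> 'k \<Rightarrow> int \<Rightarrow> 'k xser" where
  "Psi0 G gam eps j a = (\<Sum>lam | is_partition lam \<and> tau_term G gam eps lam j a \<noteq> 0.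
                           tau_term G gam eps lam j a)"

text \<open>R_eps (x^j) = gam G(eps beta j) x^(j+1), and its inverse.\<close>
definition Rop :: "'k::field_char_0 fps \<Rightarrow> 'k \<Rightarrow> int \<Rightarrow> 'k xser \<Rightarrow> 'k xser" where
  "Rop G gam eps F j a = fls_const gam * Gat G (eps * (j - 1)) * F (j - 1) a"

definition Rinv :: "'k::field_char_0 fps \<Rightarrow> 'k \<Rightarrow> int \<Rightarrow> 'k xser \<Rightarrow> 'k xser" where
  "Rinv G gam eps F j a = F (j + 1) a / (fls_const gam * Gat G (eps * j))"

definition Psi :: "'k::field_char_0 fps \<Rightarrow> 'k \<Rightarrow> int \<Rightarrow> int \<Rightarrow> 'k xser" where
  "Psi G gam eps k = (if 0 \<le> k then (Rop G gam eps ^^ nat k) (Psi0 G gam eps)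
                      else (Rinv G gam eps ^^ nat (- k)) (Psi0 G gam eps))"

definition dS :: "nat \<Rightarrow> 'k::field_char_0 xser \<Rightarrow> 'k xser" where
  "dS m F j a = of_nat (Poly_Mapping.lookup a m + 1) * F j (a + Poly_Mapping.single m 1)"

end

theory Submission
  imports Defs "Jordan_Normal_Form.Determinant"
begin

declare One_nat_def[simp del]


definition monv :: "(nat \<Rightarrow> 'r::comm_ring_1) \<Rightarrow> (nat \<Rightarrow>\<^sub>0 nat) \<Rightarrow> 'r" where
  "monv tv a = (\<Prod>i\<in>Poly_Mapping.keys a. tv i ^ Poly_Mapping.lookup a i)"

lemma monv_superset:
  assumes "finite U" "Poly_Mapping.keys a \<subseteq> U"
  shows "monv tv a = (\<Prod>i\<in>U. tv i ^ Poly_Mapping.lookup a i)"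
  unfolding monv_def
  by (rule prod.mono_neutral_left) (use assms in \<open>auto simp: in_keys_iff\<close>)

lemma monv_add: "monv tv (a + b) = monv tv a * monv tv b"
proof -
  let ?U = "Poly_Mapping.keys a \<union> Poly_Mapping.keys b"
  have "monv tv (a + b) = (\<Prod>i\<in>?U. tv i ^ Poly_Mapping.lookup (a+b) i)"
    by (rule monv_superset) (auto dest: set_mp[OF keys_add])
  also have "\<dots> = (\<Prod>i\<in>?U. tv i ^ Poly_Mapping.lookup a i * tv i ^ Poly_Mapping.lookup b i)"
    by (simp add: lookup_add power_add)
  also have "\<dots> = monv tv a * monv tv b"
    by (simp add: prod.distrib monv_superset[of ?U])
  finally show ?thesis .
qed

lemma monv_zero[simp]: "monv tv 0 = 1" by (simp add: monv_def)

lemma pm_expand: "p = (\<Sum>a\<in>Poly_Mapping.keys p. Poly_Mapping.single a (Poly_Mapping.lookup p a))"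
  by (rule poly_mapping_eqI) (simp add: lookup_sum lookup_single when_def in_keys_iff sum.delta' split: if_splits)

locale evhom =
  fixes emb :: "rat \<Rightarrow> 'r::comm_ring_1"
  assumes emb0: "emb 0 = 0" and emb1: "emb 1 = 1"
    and embadd: "emb (x + y) = emb x + emb y" and embmult: "emb (x * y) = emb x * emb y"
begin

lemma evalp_superset:
  assumes "finite S" "Poly_Mapping.keys p \<subseteq> S"
  shows "evalp emb tv p = (\<Sum>a\<in>S. emb (Poly_Mapping.lookup p a) * monv tv a)"
  unfolding evalp_def monv_def[symmetric]
  by (rule sum.mono_neutral_left) (use assms in \<open>auto simp: in_keys_iff emb0\<close>)

lemma evalp_add: "evalp emb tv (p + q) = evalp emb tv p + evalp emb tv q"
proof -
  let ?U = "Poly_Mapping.keys p \<union> Poly_Mapping.keys q"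
  have "evalp emb tv (p + q) = (\<Sum>a\<in>?U. emb (Poly_Mapping.lookup (p+q) a) * monv tv a)"
    by (rule evalp_superset) (auto dest: set_mp[OF keys_add])
  also have "\<dots> = evalp emb tv p + evalp emb tv q"
    by (simp add: lookup_add embadd distrib_right sum.distrib evalp_superset[of ?U])
  finally show ?thesis .
qed

lemma evalp_0[simp]: "evalp emb tv 0 = 0" by (simp add: evalp_def)

lemma evalp_sum: "evalp emb tv (sum f A) = (\<Sum>x\<in>A. evalp emb tv (f x))"
  by (induction A rule: infinite_finite_induct) (auto simp: evalp_add)

lemma evalp_single: "evalp emb tv (Poly_Mapping.single a c) = emb c * monv tv a"
  by (cases "c = 0") (auto simp: evalp_def monv_def emb0)

lemma evalp_mult: "evalp emb tv (p * q) = evalp emb tv p * evalp emb tv q"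
proof -
  have "p * q = (\<Sum>a\<in>Poly_Mapping.keys p. \<Sum>b\<in>Poly_Mapping.keys q.
      Poly_Mapping.single (a + b) (Poly_Mapping.lookup p a * Poly_Mapping.lookup q b))"
    by (subst pm_expand[of p], subst pm_expand[of q])
       (simp add: sum_distrib_left sum_distrib_right mult_single sum.swap[of _ "Poly_Mapping.keys q"])
  hence "evalp emb tv (p * q) = (\<Sum>a\<in>Poly_Mapping.keys p. \<Sum>b\<in>Poly_Mapping.keys q.
      emb (Poly_Mapping.lookup p a) * monv tv a * (emb (Poly_Mapping.lookup q b) * monv tv b))"
    by (simp add: evalp_sum evalp_single embmult monv_add ac_simps)
  also have "\<dots> = evalp emb tv p * evalp emb tv q"
    by (simp add: evalp_def monv_def sum_product)
  finally show ?thesis .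
qed

lemma evalp_1[simp]: "evalp emb tv 1 = 1"
  using evalp_single[where a=0 and c=1 and tv=tv] by (simp add: emb1)

lemma evalp_uminus: "evalp emb tv (- p) = - evalp emb tv p"
  using evalp_add[where p=p and q="-p" and tv=tv] by (simp add: eq_neg_iff_add_eq_0 add.commute)

lemma evalp_prod: "evalp emb tv (prod f A) = (\<Prod>x\<in>A. evalp emb tv (f x))"
  by (induction A rule: infinite_finite_induct) (auto simp: evalp_mult)

lemma evalp_of_nat: "evalp emb tv (of_nat n) = of_nat n"
  by (induction n) (auto simp: evalp_add)

lemma evalp_of_int: "evalp emb tv (of_int z) = of_int z"
proof -
  have "z = int (nat z) \<or> z = - int (nat (-z))" by auto
  thus ?thesis by (metis evalp_of_nat evalp_uminus of_int_minus of_int_of_nat_eq)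
qed

end



abbreviation em :: "nat \<Rightarrow> nat \<Rightarrow>\<^sub>0 nat" where "em i \<equiv> Poly_Mapping.single i 1"

definition wt :: "(nat \<Rightarrow>\<^sub>0 nat) \<Rightarrow> nat" where
  "wt a = (\<Sum>i\<in>Poly_Mapping.keys a. i * Poly_Mapping.lookup a i)"
definition fa :: "(nat \<Rightarrow>\<^sub>0 nat) \<Rightarrow> nat" where
  "fa a = (\<Prod>i\<in>Poly_Mapping.keys a. fact (Poly_Mapping.lookup a i))"
definition lnm :: "(nat \<Rightarrow>\<^sub>0 nat) \<Rightarrow> nat" where
  "lnm a = (\<Sum>i\<in>Poly_Mapping.keys a. Poly_Mapping.lookup a i)"

lemma wt_superset: "finite U \<Longrightarrow> Poly_Mapping.keys a \<subseteq> U \<Longrightarrow> wt a = (\<Sum>i\<in>U. i * Poly_Mapping.lookup a i)"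
  unfolding wt_def by (rule sum.mono_neutral_left) (auto simp: in_keys_iff)
lemma fa_superset: "finite U \<Longrightarrow> Poly_Mapping.keys a \<subseteq> U \<Longrightarrow> fa a = (\<Prod>i\<in>U. fact (Poly_Mapping.lookup a i))"
  unfolding fa_def by (rule prod.mono_neutral_left) (auto simp: in_keys_iff)
lemma lnm_superset: "finite U \<Longrightarrow> Poly_Mapping.keys a \<subseteq> U \<Longrightarrow> lnm a = (\<Sum>i\<in>U. Poly_Mapping.lookup a i)"
  unfolding lnm_def by (rule sum.mono_neutral_left) (auto simp: in_keys_iff)

lemma lookup_add_em: "Poly_Mapping.lookup (a + em i) k = Poly_Mapping.lookup a k + (if k = i then 1 else 0)"
  by (simp add: lookup_add lookup_single when_def)

lemma keys_add_em: "Poly_Mapping.keys (a + em i) = insert i (Poly_Mapping.keys a)"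
  by (auto simp: in_keys_iff lookup_add lookup_single when_def split: if_splits)

lemma wt_add_em: "wt (a + em i) = wt a + i"
proof -
  let ?U = "insert i (Poly_Mapping.keys a)"
  have "wt (a + em i) = (\<Sum>k\<in>?U. k * Poly_Mapping.lookup a k + (if k = i then i else 0))"
    by (subst wt_superset[of ?U]) (auto simp: keys_add_em lookup_add lookup_single when_def algebra_simps intro!: sum.cong)
  also have "\<dots> = wt a + i"
    using wt_superset[of ?U a] by (simp add: sum.distrib subset_insertI)
  finally show ?thesis .
qed

lemma lnm_add_em: "lnm (a + em i) = lnm a + 1"
proof -
  let ?U = "insert i (Poly_Mapping.keys a)"
  have "lnm (a + em i) = (\<Sum>k\<in>?U. Poly_Mapping.lookup a k + (if k = i then 1 else 0))"
    by (subst lnm_superset[of ?U]) (auto simp: keys_add_em lookup_add lookup_single when_def intro!: sum.cong)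
  also have "\<dots> = lnm a + 1"
    using lnm_superset[of ?U a] by (simp add: sum.distrib subset_insertI)
  finally show ?thesis .
qed

lemma fa_add_em: "fa (a + em i) = (Poly_Mapping.lookup a i + 1) * fa a"
proof -
  let ?U = "insert i (Poly_Mapping.keys a)"
  have "fa (a + em i) = (\<Prod>k\<in>?U. fact (Poly_Mapping.lookup (a + em i) k))"
    by (rule fa_superset) (auto simp: keys_add_em)
  also have "\<dots> = fact (Poly_Mapping.lookup (a + em i) i) * (\<Prod>k\<in>Poly_Mapping.keys a - {i}. fact (Poly_Mapping.lookup (a + em i) k))"
    by (rule prod.insert_remove) simp
  also have "\<dots> = fact (Poly_Mapping.lookup a i + 1) * (\<Prod>k\<in>Poly_Mapping.keys a - {i}. fact (Poly_Mapping.lookup a k))"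
    by (auto simp: lookup_add lookup_single when_def intro!: prod.cong)
  finally have "fa (a + em i) = fact (Poly_Mapping.lookup a i + 1) * (\<Prod>k\<in>Poly_Mapping.keys a - {i}. fact (Poly_Mapping.lookup a k))" .
  also have "fa a = fact (Poly_Mapping.lookup a i) * (\<Prod>k\<in>Poly_Mapping.keys a - {i}. fact (Poly_Mapping.lookup a k))"
    by (subst fa_superset[of ?U]) (auto simp: prod.insert_remove)
  moreover have "fact (Poly_Mapping.lookup a i + 1) = (Poly_Mapping.lookup a i + 1) * fact (Poly_Mapping.lookup a i)"
    using fact_Suc[of "Poly_Mapping.lookup a i", where 'a=nat] by (simp add: Suc_eq_plus1)
  ultimately show ?thesis by simp
qed

lemma fa_pos: "fa a > 0" by (simp add: fa_def)

lemma em_cancel: "Poly_Mapping.lookup a i \<ge> 1 \<Longrightarrow> (a - em i) + em i = a"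
  by (rule poly_mapping_eqI) (auto simp add: lookup_add lookup_single when_def lookup_minus)

lemma add_em_minus[simp]: "(a + em i) - em i = a"
  by (rule poly_mapping_eqI) (simp add: lookup_add lookup_single when_def lookup_minus lookup_single when_def)

lemma add_em_inj: "a + em i = b + em i \<longleftrightarrow> a = b"
  by (metis add_em_minus)

definition dT :: "nat \<Rightarrow> rat mvpoly \<Rightarrow> rat mvpoly" where
  "dT m p = (\<Sum>b\<in>Poly_Mapping.keys p.
      Poly_Mapping.single (b - em m) (of_nat (Poly_Mapping.lookup b m) * Poly_Mapping.lookup p b))"

lemma lookup_dT: "Poly_Mapping.lookup (dT m p) a = of_nat (Poly_Mapping.lookup a m + 1) * Poly_Mapping.lookup p (a + em m)"
proof -
  have "Poly_Mapping.lookup (dT m p) a = (\<Sum>b\<in>Poly_Mapping.keys p.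
      if b = a + em m then of_nat (Poly_Mapping.lookup a m + 1) * Poly_Mapping.lookup p (a + em m) else 0)"
    unfolding dT_def lookup_sum
  proof (rule sum.cong[OF refl])
    fix b
    show "Poly_Mapping.lookup (Poly_Mapping.single (b - em m) (of_nat (Poly_Mapping.lookup b m) * Poly_Mapping.lookup p b)) a =
      (if b = a + em m then of_nat (Poly_Mapping.lookup a m + 1) * Poly_Mapping.lookup p (a + em m) else 0)"
    proof (cases "Poly_Mapping.lookup b m = 0")
      case True
      then show ?thesis by (auto simp: lookup_single when_def lookup_add)
    next
      case False
      have bb: "b - em m + em m = b" by (rule em_cancel) (use False in simp)
      show ?thesis
      proof (cases "b - em m = a")
        case True
        then have "b = a + em m" using bb by simp
        then show ?thesis by (simp add: lookup_single lookup_add)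
      next
        case F2: False
        then have "b \<noteq> a + em m" by auto
        with F2 show ?thesis by (simp add: lookup_single when_def)
      qed
    qed
  qed
  also have "\<dots> = of_nat (Poly_Mapping.lookup a m + 1) * Poly_Mapping.lookup p (a + em m)"
    by (auto simp: sum.delta in_keys_iff)
  finally show ?thesis .
qed

lemma dT_add: "dT m (p + q) = dT m p + dT m q"
  by (rule poly_mapping_eqI) (simp add: lookup_dT lookup_add algebra_simps)

lemma dT_0[simp]: "dT m 0 = 0"
  by (rule poly_mapping_eqI) (simp add: lookup_dT)

lemma dT_sum: "dT m (sum f A) = (\<Sum>x\<in>A. dT m (f x))"
  by (induction A rule: infinite_finite_induct) (auto simp: dT_add)

lemma dT_single: "dT m (Poly_Mapping.single a c) =
   (if Poly_Mapping.lookup a m = 0 then 0 else Poly_Mapping.single (a - em m) (of_nat (Poly_Mapping.lookup a m) * c))"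
proof (rule poly_mapping_eqI)
  fix k
  show "Poly_Mapping.lookup (dT m (Poly_Mapping.single a c)) k = Poly_Mapping.lookup (if Poly_Mapping.lookup a m = 0 then 0 else Poly_Mapping.single (a - em m) (of_nat (Poly_Mapping.lookup a m) * c)) k"
  proof (cases "Poly_Mapping.lookup a m = 0")
    case True
    then show ?thesis by (auto simp: lookup_dT lookup_single when_def lookup_add)
  next
    case False
    have aa: "a - em m + em m = a" by (rule em_cancel) (use False in simp)
    show ?thesis
    proof (cases "a - em m = k")
      case True
      then have "a = k + em m" using aa by simp
      then show ?thesis by (simp add: lookup_dT lookup_single lookup_add)
    next
      case F2: False
      then have "a \<noteq> k + em m" by auto
      with F2 False show ?thesis by (simp add: lookup_dT lookup_single when_def)
    qed
  qed
qed

lemma dT_mono_mult: "dT m (Poly_Mapping.single a c * Poly_Mapping.single b d) =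
   dT m (Poly_Mapping.single a c) * Poly_Mapping.single b d + Poly_Mapping.single a c * dT m (Poly_Mapping.single b d)"
proof -
  let ?la = "Poly_Mapping.lookup a m" and ?lb = "Poly_Mapping.lookup b m"
  have 1: "a + b - em m = (a - em m) + b" if "?la \<noteq> 0"
    by (rule poly_mapping_eqI) (use that in \<open>auto simp add: lookup_add lookup_minus lookup_single when_def\<close>)
  have 2: "a + b - em m = a + (b - em m)" if "?lb \<noteq> 0"
    by (rule poly_mapping_eqI) (use that in \<open>auto simp add: lookup_add lookup_minus lookup_single when_def\<close>)
  have L: "dT m (Poly_Mapping.single a c * Poly_Mapping.single b d) =
    (if ?la + ?lb = 0 then 0 else Poly_Mapping.single (a + b - em m) (of_nat (?la + ?lb) * (c * d)))"
    by (simp add: mult_single dT_single lookup_add)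
  show ?thesis
  proof (cases "?la = 0")
    case True
    note T = True
    show ?thesis
    proof (cases "?lb = 0")
      case True
      then show ?thesis using T L by (simp add: dT_single)
    next
      case False
      then show ?thesis using T L 2[OF False] by (simp add: dT_single mult_single algebra_simps)
    qed
  next
    case False
    note F = False
    show ?thesis
    proof (cases "?lb = 0")
      case True
      then show ?thesis using F L 1[OF F] by (simp add: dT_single mult_single algebra_simps)
    next
      case False
      have "Poly_Mapping.single (a + b - em m) (of_nat (?la + ?lb) * (c * d)) =
        Poly_Mapping.single (a + b - em m) (of_nat ?la * c * d) + Poly_Mapping.single (a + b - em m) (c * (of_nat ?lb * d))"
        by (simp add: single_add[symmetric] algebra_simps)
      then show ?thesis using F False L 1[OF F] 2[OF False] by (simp add: dT_single mult_single)
    qed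
  qed
qed

lemma dT_mult: "dT m (p * q) = dT m p * q + p * dT m q"
proof -
  let ?P = "\<Sum>a\<in>Poly_Mapping.keys p. Poly_Mapping.single a (Poly_Mapping.lookup p a)"
  let ?Q = "\<Sum>b\<in>Poly_Mapping.keys q. Poly_Mapping.single b (Poly_Mapping.lookup q b)"
  have p: "p = ?P" and q: "q = ?Q" by (rule pm_expand)+
  have "dT m (?P * ?Q) = (\<Sum>a\<in>Poly_Mapping.keys p. \<Sum>b\<in>Poly_Mapping.keys q.
      dT m (Poly_Mapping.single a (Poly_Mapping.lookup p a) * Poly_Mapping.single b (Poly_Mapping.lookup q b)))"
    by (simp add: sum_distrib_left sum_distrib_right dT_sum sum.swap[of _ "Poly_Mapping.keys q"])
  also have "\<dots> = (\<Sum>a\<in>Poly_Mapping.keys p. \<Sum>b\<in>Poly_Mapping.keys q.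
      dT m (Poly_Mapping.single a (Poly_Mapping.lookup p a)) * Poly_Mapping.single b (Poly_Mapping.lookup q b)
      + Poly_Mapping.single a (Poly_Mapping.lookup p a) * dT m (Poly_Mapping.single b (Poly_Mapping.lookup q b)))"
    by (simp only: dT_mono_mult)
  also have "\<dots> = dT m ?P * ?Q + ?P * dT m ?Q"
    by (simp add: sum.distrib sum_distrib_left sum_distrib_right dT_sum) (rule arg_cong2[where f="(+)"]; rule sum.swap)
  finally show ?thesis by (simp only: p[symmetric] q[symmetric])
qed

lemma dT_const: "dT m (Poly_Mapping.single 0 c) = 0"
  by (simp add: dT_single)

lemma dT_of_int: "dT m (of_int z) = 0"
  by (metis dT_const single_of_int)

lemma dT_1[simp]: "dT m 1 = 0"
  by (metis dT_const single_one)

lemma lookup_mult_em: "Poly_Mapping.lookup (Poly_Mapping.single (em i) c * q) a =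
  (if Poly_Mapping.lookup a i \<ge> 1 then c * Poly_Mapping.lookup q (a - em i) else 0)"
proof -
  have "Poly_Mapping.single (em i) c * q = (\<Sum>b\<in>Poly_Mapping.keys q. Poly_Mapping.single (b + em i) (c * Poly_Mapping.lookup q b))"
    by (subst pm_expand[of q]) (simp add: sum_distrib_left mult_single add.commute)
  hence "Poly_Mapping.lookup (Poly_Mapping.single (em i) c * q) a =
     (\<Sum>b\<in>Poly_Mapping.keys q. if b + em i = a then c * Poly_Mapping.lookup q b else 0)"
    by (simp add: lookup_sum lookup_single when_def)
  also have "\<dots> = (if Poly_Mapping.lookup a i \<ge> 1 then c * Poly_Mapping.lookup q (a - em i) else 0)"
  proof (cases "Poly_Mapping.lookup a i \<ge> 1")
    case True
    have "(\<Sum>b\<in>Poly_Mapping.keys q. if b + em i = a then c * Poly_Mapping.lookup q b else 0)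
        = (\<Sum>b\<in>Poly_Mapping.keys q. if b = a - em i then c * Poly_Mapping.lookup q b else 0)"
      by (rule sum.cong) (use em_cancel[OF True] in auto)
    then show ?thesis using True by (auto simp: sum.delta' in_keys_iff)
  next
    case False
    have "b + em i \<noteq> a" for b using False lookup_add_em[of b i i] by auto
    then show ?thesis using False by simp
  qed
  finally show ?thesis .
qed



lemma aux_div1: "(c::rat) \<noteq> 0 \<Longrightarrow> d \<noteq> 0 \<Longrightarrow> c * (1 / (c * d)) = 1 / d"
  by (simp add: field_simps)
lemma aux_div2: "(c::rat) \<noteq> 0 \<Longrightarrow> d \<noteq> 0 \<Longrightarrow> i * (1 / d) = (i * c) / (c * d)"
  by (simp add: field_simps)

lemma lookup_mult_const: "Poly_Mapping.lookup (Poly_Mapping.single 0 c * p) a = c * Poly_Mapping.lookup p a"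
  by (simp add: mult_map_scale_conv_mult[symmetric] map.rep_eq when_def)

definition HS :: "nat \<Rightarrow> (nat \<Rightarrow>\<^sub>0 nat) set" where
  "HS N = {a. 0 \<notin> Poly_Mapping.keys a \<and> wt a = N}"

lemma HS_bounds:
  assumes "a \<in> HS N"
  shows "Poly_Mapping.keys a \<subseteq> {1..N}" "Poly_Mapping.lookup a i \<le> N"
proof -
  have z: "0 \<notin> Poly_Mapping.keys a" and w: "wt a = N" using assms by (auto simp: HS_def)
  have le: "i * Poly_Mapping.lookup a i \<le> N" if "i \<in> Poly_Mapping.keys a" for i
    using w that unfolding wt_def by (metis (no_types, lifting) finite_keys member_le_sum zero_le)
  show "Poly_Mapping.keys a \<subseteq> {1..N}"
  proof
    fix i assume i: "i \<in> Poly_Mapping.keys a"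
    hence "i \<ge> 1" using z by (cases i) auto
    moreover have "Poly_Mapping.lookup a i \<ge> 1" using i by (simp add: in_keys_iff)
    ultimately show "i \<in> {1..N}" using le[OF i]
      by (metis atLeastAtMost_iff dual_order.trans mult_le_mono1 mult_1 mult.commute)
  qed
  show "Poly_Mapping.lookup a i \<le> N"
  proof (cases "i \<in> Poly_Mapping.keys a")
    case True
    hence "i \<ge> 1" using z by (cases i) auto
    then show ?thesis using le[OF True]
      by (metis dual_order.trans mult_1 mult_le_mono1)
  next
    case False then show ?thesis by (simp add: in_keys_iff)
  qed
qed

lemma finite_HS: "finite (HS N)"
proof -
  let ?f = "\<lambda>a. map (Poly_Mapping.lookup a) [0..<Suc N]"
  have inj: "inj_on ?f (HS N)"
  proof (rule inj_onI)
    fix a b assume a: "a \<in> HS N" and b: "b \<in> HS N" and e: "?f a = ?f b"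
    show "a = b"
    proof (rule poly_mapping_eqI)
      fix k
      show "Poly_Mapping.lookup a k = Poly_Mapping.lookup b k"
      proof (cases "k \<le> N")
        case True
        then have "k < length [0..<Suc N]" by simp
        then show ?thesis using e nth_map[of k "[0..<Suc N]"] True
          by (metis le_imp_less_Suc map_eq_conv set_upt atLeastLessThan_iff zero_le)
      next
        case False
        then have "k \<notin> Poly_Mapping.keys a" "k \<notin> Poly_Mapping.keys b"
          using HS_bounds(1)[OF a] HS_bounds(1)[OF b] by auto
        then show ?thesis by (simp add: in_keys_iff)
      qed
    qed
  qed
  have "?f ` HS N \<subseteq> {xs. set xs \<subseteq> {..N} \<and> length xs = Suc N}"
    using HS_bounds(2) by auto
  then have "finite (?f ` HS N)" by (rule finite_subset) (rule finite_lists_length_eq, simp)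
  then show ?thesis using inj finite_imageD by blast
qed

lemma fa_def': "fa a = (\<Prod>i\<in>Poly_Mapping.keys a. fact (Poly_Mapping.lookup a i))" by (simp add: fa_def)

lemma lookup_hfun: "Poly_Mapping.lookup (hfun n) a =
   (if 0 \<le> n \<and> 0 \<notin> Poly_Mapping.keys a \<and> wt a = nat n then 1 / of_nat (fa a) else 0)"
proof (cases "n < 0")
  case True then show ?thesis by (simp add: hfun_def)
next
  case False
  have e: "hfun n = (\<Sum>b\<in>HS (nat n). Poly_Mapping.single b (1 / of_nat (fa b)))"
    using False by (simp add: hfun_def HS_def wt_def fa_def)
  show ?thesis using False
    by (simp add: e lookup_sum lookup_single when_def finite_HS) (auto simp: HS_def)
qed

lemma hfun_neg: "n < 0 \<Longrightarrow> hfun n = 0" by (simp add: hfun_def)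

lemma wt_zero_iff: "0 \<notin> Poly_Mapping.keys a \<Longrightarrow> wt a = 0 \<longleftrightarrow> a = 0"
proof
  assume z: "0 \<notin> Poly_Mapping.keys a" and w: "wt a = 0"
  have "Poly_Mapping.keys a = {}"
  proof (rule ccontr)
    assume "Poly_Mapping.keys a \<noteq> {}"
    then obtain i where i: "i \<in> Poly_Mapping.keys a" by blast
    hence "i \<noteq> 0" using z by metis
    moreover have "Poly_Mapping.lookup a i \<noteq> 0" using i by (simp add: in_keys_iff)
    moreover have "i * Poly_Mapping.lookup a i \<le> wt a"
      unfolding wt_def by (rule member_le_sum) (use i in auto)
    ultimately show False using w by simp
  qed
  then show "a = 0" by simp
qed (simp add: wt_def)

lemma hfun_0: "hfun 0 = 1"
proof (rule poly_mapping_eqI)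
  fix a
  show "Poly_Mapping.lookup (hfun 0) a = Poly_Mapping.lookup 1 a"
  proof (cases "a = 0")
    case True then show ?thesis by (auto simp: lookup_hfun lookup_one when_def fa_def wt_def)
  next
    case False
    then have c0: "\<not> (0 \<notin> Poly_Mapping.keys a \<and> wt a = 0)" by (metis wt_zero_iff)
    then have c: "(0 \<le> (0::int) \<and> 0 \<notin> Poly_Mapping.keys a \<and> wt a = nat 0) = False" by simp
    show ?thesis using False unfolding lookup_hfun c by (simp add: lookup_one when_def)
  qed
qed

lemma dT_hfun:
  assumes "m \<ge> 1"
  shows "dT m (hfun n) = hfun (n - int m)"
proof (rule poly_mapping_eqI)
  fix a
  have m0: "m \<noteq> 0" using assms by simp
  have c: "(0 \<le> n \<and> 0 \<notin> Poly_Mapping.keys (a + em m) \<and> wt (a + em m) = nat n) \<longleftrightarrow>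
           (0 \<le> n - int m \<and> 0 \<notin> Poly_Mapping.keys a \<and> wt a = nat (n - int m))"
    using m0 by (auto simp: keys_add_em wt_add_em)
  have nz: "rat_of_nat (Poly_Mapping.lookup a m + 1) \<noteq> 0" "rat_of_nat (fa a) \<noteq> 0"
    using fa_pos[of a] by (simp_all only: of_nat_eq_0_iff)
  have v: "rat_of_nat (Poly_Mapping.lookup a m + 1) * (1 / of_nat ((Poly_Mapping.lookup a m + 1) * fa a)) = 1 / of_nat (fa a)"
    by (simp only: of_nat_mult aux_div1[OF nz])
  show "Poly_Mapping.lookup (dT m (hfun n)) a = Poly_Mapping.lookup (hfun (n - int m)) a"
    unfolding lookup_dT lookup_hfun c fa_add_em
    by (simp only: v mult_zero_right if_distrib[of "\<lambda>x. rat_of_nat (Poly_Mapping.lookup a m + 1) * x"])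
qed

lemma hfun_term:
  assumes "1 \<le> i" "i \<le> n"
  shows "Poly_Mapping.lookup (Poly_Mapping.single (em i) (of_nat i) * hfun (int n - int i)) a =
    (if 0 \<notin> Poly_Mapping.keys a \<and> wt a = n then of_nat (i * Poly_Mapping.lookup a i) / of_nat (fa a) else 0)"
proof (cases "Poly_Mapping.lookup a i \<ge> 1")
  case True
  define b where "b = a - em i"
  have a: "a = b + em i" unfolding b_def using em_cancel[OF True] by simp
  have i0: "i \<noteq> 0" using assms by simp
  have c: "(0 \<le> int n - int i \<and> 0 \<notin> Poly_Mapping.keys b \<and> wt b = nat (int n - int i)) \<longleftrightarrow>
     (0 \<notin> Poly_Mapping.keys a \<and> wt a = n)"
    using i0 assms by (auto simp: a keys_add_em wt_add_em)
  have nz: "rat_of_nat (Poly_Mapping.lookup b i + 1) \<noteq> 0" "rat_of_nat (fa b) \<noteq> 0"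
    using fa_pos[of b] by (simp_all only: of_nat_eq_0_iff)
  have v: "rat_of_nat i * (1 / of_nat (fa b)) = of_nat (i * (Poly_Mapping.lookup b i + 1)) / of_nat ((Poly_Mapping.lookup b i + 1) * fa b)"
    by (simp only: of_nat_mult aux_div2[OF nz])
  have la: "Poly_Mapping.lookup a i = Poly_Mapping.lookup b i + 1" using a by (simp add: lookup_add_em)
  have fa': "fa a = (Poly_Mapping.lookup b i + 1) * fa b" using a fa_add_em by simp
  show ?thesis
  proof (cases "0 \<notin> Poly_Mapping.keys a \<and> wt a = n")
    case C: True
    have "Poly_Mapping.lookup (Poly_Mapping.single (em i) (of_nat i) * hfun (int n - int i)) a = of_nat i * (1 / of_nat (fa b))"
      using True C unfolding lookup_mult_em lookup_hfun b_def[symmetric] c by simp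
    also have "\<dots> = of_nat (i * Poly_Mapping.lookup a i) / of_nat (fa a)"
      by (simp only: v la fa')
    finally show ?thesis using C by simp
  next
    case C: False
    show ?thesis
      unfolding lookup_mult_em lookup_hfun b_def[symmetric] c by (simp only: True C if_True if_False mult_zero_right)
  qed
next
  case False
  then show ?thesis by (simp add: lookup_mult_em)
qed

lemma hfun_rec: "of_nat n * hfun (int n) = (\<Sum>i\<in>{1..n}. Poly_Mapping.single (em i) (of_nat i) * hfun (int n - int i))"
proof (rule poly_mapping_eqI)
  fix a
  have "Poly_Mapping.lookup (\<Sum>i\<in>{1..n}. Poly_Mapping.single (em i) (of_nat i) * hfun (int n - int i)) a =
    (\<Sum>i\<in>{1..n}. if 0 \<notin> Poly_Mapping.keys a \<and> wt a = n then of_nat (i * Poly_Mapping.lookup a i) / of_nat (fa a) else 0)"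
    unfolding lookup_sum by (rule sum.cong) (auto simp: hfun_term)
  also have "\<dots> = (if 0 \<notin> Poly_Mapping.keys a \<and> wt a = n then of_nat n / of_nat (fa a) else 0)"
  proof (cases "0 \<notin> Poly_Mapping.keys a \<and> wt a = n")
    case True
    then have "a \<in> HS n" by (simp add: HS_def)
    then have "wt a = (\<Sum>i\<in>{1..n}. i * Poly_Mapping.lookup a i)"
      by (intro wt_superset) (auto dest: HS_bounds)
    then have "(\<Sum>i\<in>{1..n}. rat_of_nat (i * Poly_Mapping.lookup a i)) = of_nat n"
      using True by (metis of_nat_sum)
    then have "(\<Sum>i\<in>{1..n}. of_nat (i * Poly_Mapping.lookup a i) / of_nat (fa a)) = (of_nat n / of_nat (fa a) :: rat)"
      by (simp only: sum_divide_distrib[symmetric])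
    then show ?thesis using True by simp
  next
    case False
    then show ?thesis by (simp only: False if_False sum.neutral_const)
  qed
  finally show "Poly_Mapping.lookup (of_nat n * hfun (int n)) a = Poly_Mapping.lookup (\<Sum>i\<in>{1..n}. Poly_Mapping.single (em i) (of_nat i) * hfun (int n - int i)) a"
    by (simp add: single_of_nat[symmetric] lookup_mult_const lookup_hfun del: single_of_nat)
qed



definition ldet :: "nat \<Rightarrow> (nat \<Rightarrow> nat \<Rightarrow> 'a::comm_ring_1) \<Rightarrow> 'a" where
  "ldet n A = (\<Sum>p | p permutes {..<n}. of_int (sign p) * (\<Prod>i<n. A i (p i)))"

lemma ldet_det: "ldet n A = det (mat n n (\<lambda>(i,j). A i j))"
proof -
  have "det (mat n n (\<lambda>(i,j). A i j)) = (\<Sum>p\<in>{p. p permutes {0..<n}}. signof p * (\<Prod>i=0..<n. mat n n (\<lambda>(i,j). A i j) $$ (i, p i)))"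
    by (rule det_def') simp
  also have "\<dots> = ldet n A"
    unfolding ldet_def lessThan_atLeast0
  proof (rule sum.cong[OF refl])
    fix p assume "p \<in> {p. p permutes {0..<n}}"
    then have "p i < n" if "i < n" for i using that permutes_in_image by fastforce
    then show "signof p * (\<Prod>i=0..<n. mat n n (\<lambda>(i,j). A i j) $$ (i, p i)) = of_int (sign p) * (\<Prod>i=0..<n. A i (p i))"
      by (auto intro!: prod.cong)
  qed
  finally show ?thesis by simp
qed

lemma ldet_cong: "(\<And>i j. i < n \<Longrightarrow> j < n \<Longrightarrow> A i j = B i j) \<Longrightarrow> ldet n A = ldet n B"
  unfolding ldet_det by (intro arg_cong[where f=det] eq_matI) auto

lemma ldet_zero_row:
  assumes "r < n" "\<And>j. j < n \<Longrightarrow> A r j = 0"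
  shows "ldet n A = 0"
  unfolding ldet_def
proof (rule sum.neutral, rule ballI)
  fix p assume "p \<in> {p. p permutes {..<n}}"
  then have "p r < n" using assms(1) permutes_in_image by fastforce
  then have "(\<Prod>i<n. A i (p i)) = 0" using assms by (intro prod_zero) auto
  then show "of_int (sign p) * (\<Prod>i<n. A i (p i)) = 0" by simp
qed

lemma ldet_prop_rows:
  assumes n: "2 \<le> n" and c: "\<And>j. j < n \<Longrightarrow> A 0 j = c * A 1 j"
  shows "ldet n A = 0"
proof -
  define B where "B = mat n n (\<lambda>(i,j). if i = 0 then A 1 j else A i j)"
  have Bc: "B \<in> carrier_mat n n" by (simp add: B_def)
  have eq: "mat n n (\<lambda>(i,j). A i j) = multrow 0 c B"
    by (rule eq_matI) (auto simp: B_def c)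
  have "det B = 0"
  proof (rule det_identical_rows[OF Bc, of 0 1])
    show "row B 0 = row B 1" by (rule eq_vecI) (use n in \<open>auto simp: B_def\<close>)
  qed (use n in auto)
  then show ?thesis unfolding ldet_det eq using det_multrow[OF _ Bc, of 0 c] n by simp
qed

lemma ldet_0: "ldet 0 A = 1"
  unfolding ldet_det by simp

lemma ldet_1: "ldet 1 A = A 0 0"
  unfolding ldet_det by (subst det_single) auto

lemma ldet_expand:
  assumes n: "1 \<le> n" and z: "\<And>i. 2 \<le> i \<Longrightarrow> i \<le> n \<Longrightarrow> A i 0 = 0"
  shows "ldet (Suc n) A = A 0 0 * ldet n (\<lambda>i j. A (Suc i) (Suc j))
             - A 1 0 * ldet n (\<lambda>i j. A (if i = 0 then 0 else Suc i) (Suc j))"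
proof -
  define M where "M = mat (Suc n) (Suc n) (\<lambda>(i,j). A i j)"
  have Mc: "M \<in> carrier_mat (Suc n) (Suc n)" by (simp add: M_def)
  have "det M = (\<Sum>i<Suc n. M $$ (i,0) * cofactor M i 0)"
    by (rule laplace_expansion_column[OF Mc]) simp
  also have "\<dots> = (\<Sum>i\<in>{0,1}. M $$ (i,0) * cofactor M i 0)"
    by (rule sum.mono_neutral_right) (use n z in \<open>auto simp: M_def\<close>)
  also have "\<dots> = M $$ (0,0) * cofactor M 0 0 + M $$ (1,0) * cofactor M 1 0"
    by simp
  finally have dM: "det M = M $$ (0,0) * cofactor M 0 0 + M $$ (1,0) * cofactor M 1 0" .
  have d0: "mat_delete M 0 0 = mat n n (\<lambda>(i,j). A (Suc i) (Suc j))"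
    by (rule eq_matI) (auto simp: M_def mat_delete_def)
  have d1: "mat_delete M 1 0 = mat n n (\<lambda>(i,j). A (if i = 0 then 0 else Suc i) (Suc j))"
    by (rule eq_matI) (auto simp: M_def mat_delete_def)
  show ?thesis
    unfolding ldet_det M_def[symmetric] dM cofactor_def d0 d1 using n by (simp add: M_def)
qed



definition Dn :: "nat \<Rightarrow> rat mvpoly" where
  "Dn n = ldet n (\<lambda>i j. hfun (1 - int i + int j))"
definition En :: "nat \<Rightarrow> int \<Rightarrow> rat mvpoly" where
  "En n k = ldet n (\<lambda>i j. if i = 0 then hfun (k + int j) else hfun (1 - int i + int j))"

lemma Dn_0: "Dn 0 = 1" by (simp add: Dn_def ldet_0)

lemma En_1: "En 1 k = hfun k" by (simp add: En_def ldet_1)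

lemma En_Suc0: "En (Suc 0) k = hfun k" by (metis One_nat_def En_1)

lemma Dn_En: "Dn n = En n 1"
  unfolding Dn_def En_def by (rule ldet_cong) simp

lemma En_Suc:
  assumes "1 \<le> n"
  shows "En (Suc n) k = hfun k * Dn n - En n (k + 1)"
proof -
  have "En (Suc n) k = hfun k * ldet n (\<lambda>i j. hfun (1 - int (Suc i) + int (Suc j)))
     - hfun 0 * ldet n (\<lambda>i j. if i = 0 then hfun (k + int (Suc j)) else hfun (1 - int (Suc i) + int (Suc j)))"
    unfolding En_def
    by (subst ldet_expand) (use assms in \<open>auto simp: hfun_neg intro!: arg_cong2[where f="(-)"] arg_cong2[where f="(*)"] ldet_cong\<close>)
  also have "ldet n (\<lambda>i j. hfun (1 - int (Suc i) + int (Suc j))) = Dn n"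
    unfolding Dn_def by (rule ldet_cong, rule arg_cong[where f=hfun]) simp
  also have "ldet n (\<lambda>i j. if i = 0 then hfun (k + int (Suc j)) else hfun (1 - int (Suc i) + int (Suc j))) = En n (k + 1)"
    unfolding En_def by (rule ldet_cong) (simp add: algebra_simps)
  finally show ?thesis by (simp add: hfun_0)
qed

lemma En_closed: "En (Suc n) k = (\<Sum>r\<le>n. of_int ((-1)^r) * hfun (k + int r) * Dn (n - r))"
proof (induction n arbitrary: k)
  case 0
  show ?case by (subst En_Suc0) (simp add: Dn_0)
next
  case (Suc n)
  have "En (Suc (Suc n)) k = hfun k * Dn (Suc n) - En (Suc n) (k + 1)"
    by (rule En_Suc) simp
  also have "\<dots> = hfun k * Dn (Suc n) - (\<Sum>r\<le>n. of_int ((-1)^r) * hfun (k + 1 + int r) * Dn (n - r))"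
    by (simp add: Suc.IH)
  also have "\<dots> = (\<Sum>r\<le>Suc n. of_int ((-1)^r) * hfun (k + int r) * Dn (Suc n - r))"
    by (subst sum.atMost_Suc_shift) (simp add: sum_negf algebra_simps)
  finally show ?case .
qed

lemma Dn_rec: "Dn (Suc n) = (\<Sum>r\<le>n. of_int ((-1)^r) * hfun (1 + int r) * Dn (n - r))"
  using En_closed[of n 1] Dn_En by simp

lemma Dn_newton:
  assumes "1 \<le> N"
  shows "(\<Sum>s\<le>N. of_int ((-1)^s) * hfun (int s) * Dn (N - s)) = 0"
proof -
  obtain n where N: "N = Suc n" using assms by (cases N) auto
  show ?thesis unfolding N
    by (subst sum.atMost_Suc_shift) (simp add: hfun_0 Dn_rec[of n] sum_negf algebra_simps)
qed

definition HH :: "rat mvpoly fps" where "HH = Abs_fps (\<lambda>s. of_int ((-1)^s) * hfun (int s))"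
definition DD :: "rat mvpoly fps" where "DD = Abs_fps Dn"
definition fdT :: "nat \<Rightarrow> rat mvpoly fps \<Rightarrow> rat mvpoly fps" where
  "fdT m F = Abs_fps (\<lambda>n. dT m (fps_nth F n))"

lemma HH_DD: "HH * DD = 1"
proof (rule fps_ext)
  fix N
  show "fps_nth (HH * DD) N = fps_nth 1 N"
  proof (cases "N = 0")
    case True then show ?thesis by (simp add: HH_def DD_def hfun_0 Dn_0)
  next
    case False
    then have "fps_nth (HH * DD) N = (\<Sum>s\<le>N. of_int ((-1)^s) * hfun (int s) * Dn (N - s))"
      by (simp add: fps_mult_nth HH_def DD_def atLeast0AtMost)
    also have "\<dots> = 0" using Dn_newton[of N] False by simp
    finally show ?thesis using False by simp
  qed
qed

lemma fdT_mult: "fdT m (F * G) = fdT m F * G + F * fdT m G"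
  by (rule fps_ext) (simp add: fdT_def fps_mult_nth dT_sum dT_mult sum.distrib)

lemma fdT_1: "fdT m 1 = 0"
  by (rule fps_ext) (simp add: fdT_def)

lemma dT_neg1_pow: "dT m ((-1)^n) = 0"
proof -
  have "(-1::rat mvpoly)^n = of_int ((-1)^n)" by simp
  then show ?thesis by (simp only: dT_of_int)
qed

lemma fdT_HH:
  assumes "1 \<le> m"
  shows "fdT m HH = fps_const (of_int ((-1)^m)) * (fps_X^m * HH)"
proof (rule fps_ext)
  fix n
  have l: "fps_nth (fdT m HH) n = of_int ((-1)^n) * hfun (int n - int m)"
    using assms by (simp add: fdT_def HH_def dT_mult dT_of_int dT_hfun dT_neg1_pow)
  show "fps_nth (fdT m HH) n = fps_nth (fps_const (of_int ((-1)^m)) * (fps_X^m * HH)) n"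
  proof (cases "n < m")
    case True
    then show ?thesis unfolding l by (simp add: hfun_neg fps_X_power_mult_nth)
  next
    case False
    then have "(-1::int)^n = (-1)^m * (-1)^(n - m)" by (simp add: power_add[symmetric])
    moreover have "int n - int m = int (n - m)" using False by simp
    ultimately show ?thesis unfolding l using False by (simp add: HH_def fps_X_power_mult_nth)
  qed
qed

lemma fdT_DD:
  assumes "1 \<le> m"
  shows "fdT m DD = - (fps_const (of_int ((-1)^m)) * (fps_X^m * DD))"
proof -
  let ?c = "fps_const (of_int ((-1)^m)) :: rat mvpoly fps"
  have "fdT m (HH * DD) = 0" by (simp add: HH_DD fdT_1)
  hence "fdT m HH * DD + HH * fdT m DD = 0" by (simp add: fdT_mult)
  hence "?c * fps_X^m * (HH * DD) + HH * fdT m DD = 0" using assms by (simp add: fdT_HH mult.assoc mult.left_commute)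
  hence "?c * fps_X^m + HH * fdT m DD = 0" by (simp add: HH_DD)
  hence "DD * (?c * fps_X^m + HH * fdT m DD) = 0" by simp
  hence "?c * fps_X^m * DD + (HH * DD) * fdT m DD = 0" by (simp add: algebra_simps)
  hence "?c * fps_X^m * DD + fdT m DD = 0" by (simp add: HH_DD)
  then show ?thesis by (simp add: mult.assoc eq_neg_iff_add_eq_0 add.commute)
qed

lemma dT_Dn:
  assumes "1 \<le> m"
  shows "dT m (Dn N) = of_int ((-1)^(m+1)) * (if N < m then 0 else Dn (N - m))"
proof -
  have "dT m (Dn N) = fps_nth (fdT m DD) N" by (simp add: fdT_def DD_def)
  also have "\<dots> = - (of_int ((-1)^m) * (if N < m then 0 else Dn (N - m)))"
    unfolding fdT_DD[OF assms] by (simp add: DD_def fps_X_power_mult_nth)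
  finally show ?thesis by (auto simp: power_add)
qed



interpretation ex: evhom "\<lambda>q::rat. [:q:]"
  by unfold_locales (simp_all add: mult_to_poly)

lemma evalp_ldet:
  assumes "evhom emb"
  shows "evalp emb tv (ldet n A) = ldet n (\<lambda>i j. evalp emb tv (A i j))"
proof -
  interpret e: evhom emb by fact
  show ?thesis
    unfolding ldet_def by (simp add: e.evalp_sum e.evalp_mult e.evalp_of_int e.evalp_prod)
qed

abbreviation tvx :: "int \<Rightarrow> nat \<Rightarrow> rat poly" where
  "tvx eps \<equiv> (\<lambda>i. Polynomial.monom (of_int eps / of_nat i) i)"

definition hx :: "int \<Rightarrow> int \<Rightarrow> rat poly" where
  "hx eps k = evalp (\<lambda>q. [:q:]) (tvx eps) (hfun k)"

lemma schur_ldet: "schur lam = ldet (length lam) (\<lambda>i j. hfun (int (lam ! i) - int i + int j))"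
  by (simp add: schur_def ldet_def Let_def)

lemma schur_x_ldet: "schur_x eps lam = ldet (length lam) (\<lambda>i j. hx eps (int (lam ! i) - int i + int j))"
  unfolding schur_x_def schur_ldet hx_def
  by (rule evalp_ldet) unfold_locales

lemma hx_neg: "k < 0 \<Longrightarrow> hx eps k = 0"
  by (simp add: hx_def hfun_neg)

lemma hx_0: "hx eps 0 = 1"
  by (simp add: hx_def hfun_0)

lemma monv_em: "monv tv (em i) = tv i"
  by (simp add: monv_def)

lemma hx_rec:
  "of_nat n * hx eps (int n) = (\<Sum>i\<in>{1..n}. Polynomial.monom (of_int eps) i * hx eps (int n - int i))"
proof -
  have "of_nat n * hx eps (int n) = evalp (\<lambda>q. [:q:]) (tvx eps) (of_nat n * hfun (int n))"
    by (simp add: hx_def ex.evalp_mult ex.evalp_of_nat)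
  also have "\<dots> = (\<Sum>i\<in>{1..n}. [:of_nat i:] * tvx eps i * hx eps (int n - int i))"
    unfolding hfun_rec by (simp add: ex.evalp_sum ex.evalp_mult ex.evalp_single monv_em hx_def)
  also have "\<dots> = (\<Sum>i\<in>{1..n}. Polynomial.monom (of_int eps) i * hx eps (int n - int i))"
  proof (rule sum.cong[OF refl])
    fix i assume "i \<in> {1..n}"
    then have "i \<noteq> 0" by simp
    then have "[:of_nat i:] * tvx eps i = Polynomial.monom (of_int eps) i"
      by (simp add: monom_0[symmetric] mult_monom del: monom_0)
    then show "[:of_nat i:] * tvx eps i * hx eps (int n - int i) = Polynomial.monom (of_int eps) i * hx eps (int n - int i)"
      by simp
  qed
  finally show ?thesis .
qed

lemma hx_pos: "hx 1 (int n) = Polynomial.monom 1 n"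
proof (induction n rule: less_induct)
  case (less n)
  show ?case
  proof (cases "n = 0")
    case True then show ?thesis by (simp add: hx_0)
  next
    case False
    have "of_nat n * hx 1 (int n) = (\<Sum>i\<in>{1..n}. Polynomial.monom 1 i * hx 1 (int n - int i))"
      using hx_rec[of n 1] by simp
    also have "\<dots> = (\<Sum>i\<in>{1..n}. Polynomial.monom 1 n)"
    proof (rule sum.cong[OF refl])
      fix i assume i: "i \<in> {1..n}"
      have e: "hx 1 (int n - int i) = Polynomial.monom 1 (n - i)"
        using less.IH[of "n - i"] i by (simp add: of_nat_diff)
      show "Polynomial.monom 1 i * hx 1 (int n - int i) = Polynomial.monom 1 n"
        using i by (simp add: e mult_monom)
    qed
    also have "\<dots> = of_nat n * Polynomial.monom 1 n" by simp
    finally have "of_nat n * hx 1 (int n) = of_nat n * Polynomial.monom 1 n" .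
    then show ?thesis using False by simp
  qed
qed

lemma hx_pos': "0 \<le> k \<Longrightarrow> hx 1 k = Polynomial.monom 1 (nat k)"
  using hx_pos[of "nat k"] by simp

lemma hx_negeps: "hx (-1) (int n) = (if n = 0 then 1 else if n = 1 then - Polynomial.monom 1 1 else 0)"
proof (induction n rule: less_induct)
  case (less n)
  show ?case
  proof (cases "n = 0")
    case True then show ?thesis by (simp add: hx_0)
  next
    case False
    have "of_nat n * hx (-1) (int n) = (\<Sum>i\<in>{1..n}. Polynomial.monom (-1) i * hx (-1) (int n - int i))"
      using hx_rec[of n "-1"] by simp
    also have "\<dots> = (\<Sum>i\<in>{1..n}. if i = n then - Polynomial.monom 1 n else if i + 1 = n then Polynomial.monom 1 n else 0)"
    proof (rule sum.cong[OF refl])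
      fix i assume i: "i \<in> {1..n}"
      have e: "hx (-1) (int n - int i) = (if n - i = 0 then 1 else if n - i = 1 then - Polynomial.monom 1 1 else 0)"
        using less.IH[of "n - i"] i by (simp add: of_nat_diff)
      show "Polynomial.monom (-1) i * hx (-1) (int n - int i) = (if i = n then - Polynomial.monom 1 n else if i + 1 = n then Polynomial.monom 1 n else 0)"
        using i False unfolding e by (auto simp: mult_monom minus_monom)
    qed
    also have "\<dots> = (if n = 1 then - Polynomial.monom 1 1 else 0)"
    proof (cases "n = 1")
      case True then show ?thesis by simp
    next
      case n1: False
      then have "n \<ge> 2" using False by simp
      have "(\<Sum>i\<in>{1..n}. (if i = n then - Polynomial.monom 1 n else if i + 1 = n then Polynomial.monom 1 n else (0 :: rat poly)))
          = (\<Sum>i\<in>{1..n}. (if i = n then - Polynomial.monom 1 n else 0) + (if i = n - 1 then Polynomial.monom 1 n else 0))"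
        by (rule sum.cong) (use \<open>n \<ge> 2\<close> in auto)
      also have "\<dots> = 0" using \<open>n \<ge> 2\<close> by (simp add: sum.distrib)
      finally show ?thesis using n1 by simp
    qed
    finally have "of_nat n * hx (-1) (int n) = of_nat n * (if n = 1 then - Polynomial.monom 1 1 else 0)"
      by simp
    then show ?thesis using False by simp
  qed
qed



lemma (in evhom) evalp_power: "evalp emb tv (p ^ n) = evalp emb tv p ^ n"
  by (induction n) (simp_all add: evalp_mult)

lemma ldet_Suc0: "ldet (Suc 0) A = A 0 0" by (metis One_nat_def ldet_1)

lemma part_pos: "is_partition lam \<Longrightarrow> i < length lam \<Longrightarrow> 0 < lam ! i"
  unfolding is_partition_def by (meson nth_mem)

lemma part_mono: "is_partition lam \<Longrightarrow> i \<le> j \<Longrightarrow> j < length lam \<Longrightarrow> lam ! j \<le> lam ! i"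
  unfolding is_partition_def
  by (metis le_eq_less_or_eq order_refl sorted_wrt_nth_less)

lemma schur_x_long:
  assumes p: "is_partition lam" and l: "2 \<le> length lam"
  shows "schur_x 1 lam = 0"
  unfolding schur_x_ldet
proof (rule ldet_prop_rows[OF l])
  fix j assume "j < length lam"
  have p1: "1 \<le> lam ! 1" using part_pos[OF p, of 1] l by simp
  have m: "lam ! 1 \<le> lam ! 0" using part_mono[OF p, of 0 1] l by simp
  have A0: "hx 1 (int (lam ! 0) - int 0 + int j) = Polynomial.monom 1 (lam ! 0 + j)"
    using hx_pos[of "lam ! 0 + j"] by simp
  have e1: "int (lam ! 1) - int 1 + int j = int (lam ! 1 - 1 + j)" using p1 by simp
  have A1: "hx 1 (int (lam ! 1) - int 1 + int j) = Polynomial.monom 1 (lam ! 1 - 1 + j)"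
    unfolding e1 by (rule hx_pos)
  have s: "(lam ! 0 - lam ! 1 + 1) + (lam ! 1 - 1 + j) = lam ! 0 + j" using p1 m by linarith
  have M: "Polynomial.monom (1::rat) (lam ! 0 - lam ! 1 + 1) * Polynomial.monom 1 (lam ! 1 - 1 + j) = Polynomial.monom 1 (lam ! 0 + j)"
    unfolding mult_monom s by simp
  show "hx 1 (int (lam ! 0) - int 0 + int j) =
      Polynomial.monom 1 (lam ! 0 - lam ! 1 + 1) * hx 1 (int (lam ! 1) - int 1 + int j)"
    unfolding A0 A1 M ..
qed

lemma schur_x_row: "schur_x 1 [n] = Polynomial.monom 1 n"
  unfolding schur_x_ldet using hx_pos[of n] by (simp add: ldet_Suc0)

lemma schur_x_nil: "schur_x eps [] = 1"
  unfolding schur_x_ldet by (simp add: ldet_0)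

lemma schur_x_wide:
  assumes p: "is_partition lam" and ne: "lam \<noteq> []" and w: "2 \<le> lam ! 0"
  shows "schur_x (-1) lam = 0"
  unfolding schur_x_ldet
proof (rule ldet_zero_row[of 0])
  show "0 < length lam" using ne by simp
  fix j
  have "int (lam ! 0) - int 0 + int j = int (lam ! 0 + j)" by simp
  then show "hx (-1) (int (lam ! 0) - int 0 + int j) = 0"
    using w by (simp only: hx_negeps) simp
qed

lemma part_col:
  assumes p: "is_partition lam" and c: "lam = [] \<or> lam ! 0 \<le> 1"
  shows "lam = replicate (length lam) 1"
proof (rule nth_equalityI)
  fix i assume i: "i < length lam"
  then have "lam ! i \<le> lam ! 0" using part_mono[OF p, of 0 i] by simp
  moreover have "0 < lam ! i" using part_pos[OF p i] .
  ultimately show "lam ! i = replicate (length lam) 1 ! i" using c i by auto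
qed simp

lemma schur_col: "schur (replicate n 1) = Dn n"
  unfolding schur_ldet Dn_def length_replicate by (rule ldet_cong) simp

definition Dx :: "nat \<Rightarrow> rat poly" where
  "Dx n = evalp (\<lambda>q. [:q:]) (tvx (-1)) (Dn n)"

lemma Dx_closed: "Dx n = Polynomial.monom ((-1)^n) n"
proof (induction n)
  case 0 then show ?case by (simp add: Dx_def Dn_0)
next
  case (Suc n)
  have "Dx (Suc n) = (\<Sum>r\<le>n. of_int ((-1)^r) * hx (-1) (1 + int r) * Dx (n - r))"
    unfolding Dx_def Dn_rec by (simp add: ex.evalp_sum ex.evalp_mult ex.evalp_of_int hx_def ex.evalp_power ex.evalp_uminus)
  also have "\<dots> = (\<Sum>r\<in>{0}. of_int ((-1)^r) * hx (-1) (1 + int r) * Dx (n - r))"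
  proof (rule sum.mono_neutral_right)
    show "\<forall>i\<in>{..n} - {0}. of_int ((-1)^i) * hx (-1) (1 + int i) * Dx (n - i) = 0"
    proof
      fix i assume "i \<in> {..n} - {0}"
      then have "i \<noteq> 0" by simp
      moreover have "1 + int i = int (1 + i)" by simp
      ultimately show "of_int ((-1)^i) * hx (-1) (1 + int i) * Dx (n - i) = 0"
        by (simp only: hx_negeps) simp
    qed
  qed auto
  also have "\<dots> = - Polynomial.monom 1 1 * Dx n"
    using hx_negeps[of 1] by simp
  also have "\<dots> = Polynomial.monom ((-1)^(Suc n)) (Suc n)"
    by (simp add: Suc.IH mult_monom minus_monom plus_1_eq_Suc)
  finally show ?case .
qed

lemma schur_x_col: "schur_x (-1) (replicate n 1) = Polynomial.monom ((-1)^n) n"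
  using Dx_closed[of n] by (simp add: schur_x_def schur_col Dx_def)

lemma single_em_pow: "Poly_Mapping.single (em i) c ^ n = Poly_Mapping.single (Poly_Mapping.single i n) (c ^ n)"
proof (induction n)
  case 0 then show ?case by simp
next
  case (Suc n)
  have "em i + Poly_Mapping.single i n = Poly_Mapping.single i (Suc n)"
    by (simp add: single_add[symmetric] plus_1_eq_Suc)
  then show ?case by (simp add: Suc mult_single)
qed

lemma prod_single: "finite K \<Longrightarrow> (\<Prod>i\<in>K. Poly_Mapping.single (f i) (g i)) = Poly_Mapping.single (\<Sum>i\<in>K. f i) (\<Prod>i\<in>K. g i)"
  by (induction K rule: finite_induct) (simp_all add: mult_single)

lemma monv_S: "monv (\<lambda>i. Poly_Mapping.single (em i) (x :: 'a :: comm_ring_1)) b = Poly_Mapping.single b (x ^ lnm b)"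
proof -
  have "monv (\<lambda>i. Poly_Mapping.single (em i) x) b =
     (\<Prod>i\<in>Poly_Mapping.keys b. Poly_Mapping.single (Poly_Mapping.single i (Poly_Mapping.lookup b i)) (x ^ Poly_Mapping.lookup b i))"
    by (simp add: monv_def single_em_pow)
  also have "\<dots> = Poly_Mapping.single b (x ^ lnm b)"
    by (simp add: prod_single power_sum lnm_def pm_expand[of b, symmetric])
  finally show ?thesis .
qed

lemma lookup_evalpS:
  "Poly_Mapping.lookup (evalp (\<lambda>q. Poly_Mapping.single 0 (fls_const (of_rat q)))
      (\<lambda>i. Poly_Mapping.single (Poly_Mapping.single i 1) fls_X_inv) p) a
   = fls_const (of_rat (Poly_Mapping.lookup p a)) * (fls_X_inv :: 'k::field_char_0 fls) ^ lnm a"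
proof -
  have "evalp (\<lambda>q. Poly_Mapping.single 0 (fls_const (of_rat q))) (\<lambda>i. Poly_Mapping.single (Poly_Mapping.single i 1) (fls_X_inv :: 'k fls)) p
     = (\<Sum>b\<in>Poly_Mapping.keys p. Poly_Mapping.single b (fls_const (of_rat (Poly_Mapping.lookup p b)) * fls_X_inv ^ lnm b))"
    unfolding evalp_def monv_def[symmetric] monv_S by (simp add: mult_single)
  then show ?thesis
    by (simp add: lookup_sum lookup_single when_def in_keys_iff)
qed

lemma lookup_schur_s: "Poly_Mapping.lookup (schur_s lam) a =
   fls_const (of_rat (Poly_Mapping.lookup (schur lam) a)) * (fls_X_inv :: 'k::field_char_0 fls) ^ lnm a"
  unfolding schur_s_def by (rule lookup_evalpS)



lemma XXinv: "fls_X * (fls_X_inv :: 'k::field fls) = 1"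
  by (metis fls_X_nonzero fls_inverse_X right_inverse)

lemma Gat_nz: "fps_nth G 0 = 1 \<Longrightarrow> Gat G c \<noteq> 0"
proof
  assume G0: "fps_nth G 0 = 1" and "Gat G c = 0"
  hence "G oo (fps_const (of_int c) * fps_X) = 0" by (simp add: Gat_def)
  hence "fps_nth (G oo (fps_const (of_int c) * fps_X)) 0 = 0" by simp
  thus False using G0 by (simp add: fps_compose_nth_0)
qed

definition colrow :: "int \<Rightarrow> nat \<Rightarrow> nat list" where
  "colrow eps n = (if eps = 1 then (if n = 0 then [] else [n]) else replicate n 1)"

definition Pn :: "int \<Rightarrow> nat \<Rightarrow> rat mvpoly" where
  "Pn eps n = (if eps = 1 then hfun (int n) else Dn n)"

lemma colrow_part: "is_partition (colrow eps n)"
  by (auto simp: colrow_def is_partition_def sorted_wrt_iff_nth_less)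

lemma colrow_sum: "sum_list (colrow eps n) = n"
  by (simp add: colrow_def sum_list_replicate)

lemma schur_nil: "schur [] = 1"
  by (simp add: schur_ldet ldet_0)

lemma schur_single: "schur [n] = hfun (int n)"
  by (simp add: schur_ldet ldet_Suc0)

lemma schur_colrow: "eps \<in> {1, -1} \<Longrightarrow> schur (colrow eps n) = Pn eps n"
  by (auto simp: colrow_def Pn_def schur_nil schur_single hfun_0 schur_col)

lemma schur_x_colrow: "eps \<in> {1, -1} \<Longrightarrow> schur_x eps (colrow eps n) = Polynomial.monom (of_int eps ^ n) n"
  by (auto simp: colrow_def schur_x_nil schur_x_row schur_x_col)

lemma rlam_colrow: "eps \<in> {1, -1} \<Longrightarrow> rlam G (colrow eps n) = (\<Prod>c<n. Gat G (eps * int c))"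
  by (auto simp: colrow_def rlam_def lessThan_Suc intro!: prod.cong)

lemma only_colrow:
  assumes eps: "eps \<in> {1, -1}" and p: "is_partition lam" and c: "poly.coeff (schur_x eps lam) N \<noteq> 0"
  shows "lam = colrow eps N"
proof (cases "eps = 1")
  case True
  show ?thesis
  proof (cases "length lam")
    case 0
    then have "lam = []" by simp
    then show ?thesis using c True by (auto simp: schur_x_nil colrow_def split: if_splits)
  next
    case (Suc l)
    show ?thesis
    proof (cases l)
      case 0
      then obtain n where lam: "lam = [n]" using Suc by (cases lam) auto
      then have "0 < n" using part_pos[OF p, of 0] by simp
      then show ?thesis using c True lam by (auto simp: schur_x_row colrow_def coeff_monom split: if_splits)
    next
      case (Suc l')
      then have "2 \<le> length lam" using \<open>length lam = Suc l\<close> by simp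
      then show ?thesis using c True schur_x_long[OF p] by simp
    qed
  qed
next
  case False
  then have em1: "eps = -1" using eps by simp
  show ?thesis
  proof (cases "lam \<noteq> [] \<and> 2 \<le> lam ! 0")
    case True
    then show ?thesis using c em1 schur_x_wide[OF p] by auto
  next
    case False
    then have "lam = replicate (length lam) 1" using part_col[OF p] by force
    then show ?thesis using c em1 schur_x_col[of "length lam"]
      by (auto simp: colrow_def coeff_monom split: if_splits)
  qed
qed

lemma sum_sub_single:
  assumes "S \<subseteq> {x}" "x \<notin> S \<Longrightarrow> f x = 0"
  shows "sum f S = f x"
proof (cases "x \<in> S")
  case True then have "S = {x}" using assms(1) by auto
  then show ?thesis by simp
next
  case False then have "S = {}" using assms(1) by auto
  then show ?thesis using assms(2) False by simp
qed

lemma Psi0_eq: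
  assumes eps: "eps \<in> {1, -1}"
  shows "Psi0 G gam eps j a = (if 0 \<le> j then tau_term G gam eps (colrow eps (nat j)) j a else 0)"
proof -
  let ?S = "{lam. is_partition lam \<and> tau_term G gam eps lam j a \<noteq> 0}"
  have nz: "0 \<le> j \<and> poly.coeff (schur_x eps lam) (nat j) \<noteq> 0" if "tau_term G gam eps lam j a \<noteq> 0" for lam
    using that by (auto simp: tau_term_def split: if_splits)
  have sub: "?S \<subseteq> {colrow eps (nat j)}"
    using nz only_colrow[OF eps] by blast
  show ?thesis
  proof (cases "0 \<le> j")
    case True
    have "sum (\<lambda>lam. tau_term G gam eps lam j a) ?S = tau_term G gam eps (colrow eps (nat j)) j a"
      by (rule sum_sub_single[OF sub]) (use colrow_part in auto)
    then show ?thesis using True by (simp add: Psi0_def)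
  next
    case False
    then have "?S = {}" using nz by auto
    then show ?thesis using False by (simp add: Psi0_def)
  qed
qed

lemma tau_colrow:
  assumes eps: "eps \<in> {1, -1}"
  shows "tau_term G gam eps (colrow eps n) (int n) a =
    fls_const (gam ^ n) * (\<Prod>c<n. Gat G (eps * int c)) * fls_const (of_int eps ^ n) *
    (fls_const (of_rat (Poly_Mapping.lookup (Pn eps n) a)) * fls_X_inv ^ lnm a)"
  unfolding tau_term_def colrow_sum rlam_colrow[OF eps] lookup_schur_s schur_colrow[OF eps] schur_x_colrow[OF eps]
  by (simp add: coeff_monom of_rat_power)

lemma dT_Pn:
  assumes eps: "eps \<in> {1, -1}" and m: "1 \<le> m"
  shows "dT m (Pn eps n) = of_int (eps ^ (m + 1)) * (if n < m then 0 else Pn eps (n - m))"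
proof (cases "eps = 1")
  case True
  then show ?thesis using m by (auto simp: Pn_def dT_hfun hfun_neg of_nat_diff)
next
  case False
  then have "eps = -1" using eps by simp
  then show ?thesis using m by (simp add: Pn_def dT_Dn)
qed

lemma lookup_of_int_mult: "Poly_Mapping.lookup (of_int c * p) a = of_int c * Poly_Mapping.lookup p a"
  by (metis lookup_mult_const single_of_int)

lemma Rop_pow: "(Rop G gam eps ^^ m) F j a = (\<Prod>l<m. fls_const gam * Gat G (eps * (j - 1 - int l))) * F (j - int m) a"
proof (induction m arbitrary: j)
  case 0 show ?case by simp
next
  case (Suc m)
  have "(Rop G gam eps ^^ Suc m) F j a = fls_const gam * Gat G (eps * (j - 1)) * (Rop G gam eps ^^ m) F (j - 1) a"
    by (simp add: Rop_def)
  also have "\<dots> = fls_const gam * Gat G (eps * (j - 1)) * ((\<Prod>l<m. fls_const gam * Gat G (eps * (j - 1 - 1 - int l))) * F (j - 1 - int m) a)"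
    by (simp only: Suc.IH)
  also have "\<dots> = (\<Prod>l<Suc m. fls_const gam * Gat G (eps * (j - 1 - int l))) * F (j - int (Suc m)) a"
    by (subst prod.lessThan_Suc_shift) (simp add: algebra_simps)
  finally show ?case .
qed

lemma RL_shift: "(\<Prod>c<n' + m. Gat G (eps * int c)) = (\<Prod>c<n'. Gat G (eps * int c)) * (\<Prod>l<m. Gat G (eps * (int (n' + m) - 1 - int l)))"
proof (induction m)
  case 0 show ?case by simp
next
  case (Suc m)
  have "(\<Prod>c<n' + Suc m. Gat G (eps * int c)) = (\<Prod>c<n' + m. Gat G (eps * int c)) * Gat G (eps * int (n' + m))"
    by simp
  also have "\<dots> = (\<Prod>c<n'. Gat G (eps * int c)) * (\<Prod>l<m. Gat G (eps * (int (n' + m) - 1 - int l))) * Gat G (eps * int (n' + m))"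
    by (simp only: Suc.IH)
  also have "\<dots> = (\<Prod>c<n'. Gat G (eps * int c)) * (\<Prod>l<Suc m. Gat G (eps * (int (n' + Suc m) - 1 - int l)))"
    by (subst prod.lessThan_Suc_shift) (simp add: algebra_simps)
  finally show ?case .
qed

lemma main0:
  assumes eps: "eps \<in> {1, -1}" and m: "0 < m"
  shows "(Rop G gam eps ^^ m) (Psi0 G gam eps) j a = fls_const (of_int eps) * fls_X * dS m (Psi0 G gam eps) j a"
proof (cases "0 \<le> j")
  case False
  then show ?thesis by (simp add: Rop_pow dS_def Psi0_eq[OF eps])
next
  case True
  then obtain n where j: "j = int n" by (metis nonneg_int_cases)
  let ?E = "fls_const (of_int eps) :: 'a fls"
  let ?RL = "\<lambda>n. (\<Prod>c<n. Gat G (eps * int c))"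
  have m1: "1 \<le> m" using m by simp
  have key: "of_nat (Poly_Mapping.lookup a m + 1) * fls_const (of_rat (Poly_Mapping.lookup (Pn eps n) (a + em m)))
      = (fls_const (of_rat (of_int (eps ^ (m + 1)) * (if n < m then 0 else Poly_Mapping.lookup (Pn eps (n - m)) a))) :: 'a fls)"
  proof -
    have "of_nat (Poly_Mapping.lookup a m + 1) * fls_const (of_rat (Poly_Mapping.lookup (Pn eps n) (a + em m)))
       = (fls_const (of_rat (Poly_Mapping.lookup (dT m (Pn eps n)) a)) :: 'a fls)"
      by (simp add: lookup_dT fls_of_nat of_rat_mult of_rat_add)
    also have "\<dots> = fls_const (of_rat (of_int (eps ^ (m + 1)) * (if n < m then 0 else Poly_Mapping.lookup (Pn eps (n - m)) a)))"
      unfolding dT_Pn[OF eps m1] lookup_of_int_mult by (simp split: if_splits)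
    finally show ?thesis .
  qed
  have R: "fls_const (of_int eps) * fls_X * dS m (Psi0 G gam eps) j a =
     ?E * fls_X * (fls_const (gam ^ n) * ?RL n * fls_const (of_int eps ^ n) *
       ((of_nat (Poly_Mapping.lookup a m + 1) * fls_const (of_rat (Poly_Mapping.lookup (Pn eps n) (a + em m)))) * fls_X_inv ^ lnm (a + em m)))"
    unfolding dS_def Psi0_eq[OF eps] j using tau_colrow[OF eps, where gam=gam and n=n and G=G and a="a + em m"]
    by (simp add: mult.assoc mult.left_commute)
  show ?thesis
  proof (cases "n < m")
    case True
    have "(Rop G gam eps ^^ m) (Psi0 G gam eps) j a = 0"
      using True by (simp add: Rop_pow Psi0_eq[OF eps] j)
    moreover have "fls_const (of_int eps) * fls_X * dS m (Psi0 G gam eps) j a = 0"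
      unfolding R key using True by simp
    ultimately show ?thesis by simp
  next
    case False
    define n' where "n' = n - m"
    have n: "n = n' + m" using False by (simp add: n'_def)
    define A where "A = (fls_const (of_rat (Poly_Mapping.lookup (Pn eps n') a)) * fls_X_inv ^ lnm a :: 'a fls)"
    define Q where "Q = (\<Prod>l<m. Gat G (eps * (int n - 1 - int l)))"
    have L: "(Rop G gam eps ^^ m) (Psi0 G gam eps) j a =
       (fls_const gam ^ m * Q) * (fls_const (gam ^ n') * ?RL n' * fls_const (of_int eps ^ n') * A)"
    proof -
      have "(\<Prod>l<m. fls_const gam * Gat G (eps * (j - 1 - int l))) = fls_const gam ^ m * Q"
        by (simp add: prod.distrib Q_def j)
      moreover have "j - int m = int n'" using n j by simp
      ultimately show ?thesis
        by (simp add: Rop_pow Psi0_eq[OF eps] tau_colrow[OF eps] A_def)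
    qed
    have sc: "of_int eps * (of_int eps ^ n * of_int (eps ^ (m + 1))) = (of_int eps ^ n' :: 'a)"
    proof -
      have e2: "(of_int eps :: 'a) * of_int eps = 1" using eps by auto
      have "(of_int eps :: 'a) * (of_int eps ^ n * of_int (eps ^ (m + 1))) = of_int eps ^ n' * (of_int eps * of_int eps) ^ (m + 1)"
        by (simp add: n power_add power_mult_distrib algebra_simps)
      then show ?thesis using e2 by simp
    qed
    have Rv: "fls_const (of_int eps) * fls_X * dS m (Psi0 G gam eps) j a =
       fls_const (of_int eps * (of_int eps ^ n * of_int (eps ^ (m + 1)))) * (fls_X * fls_X_inv) * fls_const (gam ^ n) * ?RL n * A"
      unfolding R key using False
      by (simp add: A_def lnm_add_em of_rat_mult n'_def[symmetric] power_add of_rat_power fls_const_mult_const[symmetric] mult_ac del: fls_const_mult_const)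
    have RLn: "?RL n = ?RL n' * Q" unfolding n Q_def by (rule RL_shift)
    show ?thesis
      unfolding L Rv sc XXinv RLn
      by (simp add: n power_add fls_const_power mult_ac fls_const_mult_const[symmetric] del: fls_const_mult_const)
  qed
qed



definition scl :: "int \<Rightarrow> 'k::field_char_0 xser \<Rightarrow> 'k xser" where
  "scl eps F = (\<lambda>j a. fls_const (of_int eps) * fls_X * F j a)"

lemma dS_Rop: "dS m (Rop G gam eps F) = Rop G gam eps (dS m F)"
  by (rule ext)+ (simp add: dS_def Rop_def mult_ac)

lemma dS_Rinv: "dS m (Rinv G gam eps F) = Rinv G gam eps (dS m F)"
  by (rule ext)+ (simp add: dS_def Rinv_def mult_ac times_divide_eq_right)

lemma scl_Rop: "Rop G gam eps (scl e F) = scl e (Rop G gam eps F)"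
  by (rule ext)+ (simp add: scl_def Rop_def mult_ac)

lemma scl_Rinv: "Rinv G gam eps (scl e F) = scl e (Rinv G gam eps F)"
  by (rule ext)+ (simp add: scl_def Rinv_def mult_ac times_divide_eq_right)

lemma Rop_Rinv:
  assumes G0: "fps_nth G 0 = 1" and g: "gam \<noteq> 0"
  shows "Rop G gam eps (Rinv G gam eps F) = F"
proof (rule ext, rule ext)
  fix j a
  have nz: "fls_const gam * Gat G (eps * (j - 1)) \<noteq> 0"
    using Gat_nz[OF G0] fls_const_nonzero[OF g] by simp
  show "Rop G gam eps (Rinv G gam eps F) j a = F j a"
    using nz by (simp add: Rop_def Rinv_def)
qed

lemma Rinv_Rop:
  assumes G0: "fps_nth G 0 = 1" and g: "gam \<noteq> 0"
  shows "Rinv G gam eps (Rop G gam eps F) = F"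
proof (rule ext, rule ext)
  fix j a
  have nz: "fls_const gam * Gat G (eps * j) \<noteq> 0"
    using Gat_nz[OF G0] fls_const_nonzero[OF g] by simp
  show "Rinv G gam eps (Rop G gam eps F) j a = F j a"
    using nz by (simp add: Rop_def Rinv_def)
qed

lemma Psi_Suc:
  assumes G0: "fps_nth G 0 = 1" and g: "gam \<noteq> 0"
  shows "Psi G gam eps (k + 1) = Rop G gam eps (Psi G gam eps k)"
proof (cases "0 \<le> k")
  case True
  then have "nat (k + 1) = Suc (nat k)" by simp
  then show ?thesis using True by (simp add: Psi_def)
next
  case False
  have a: "Psi G gam eps (k + 1) = (Rinv G gam eps ^^ nat (- (k + 1))) (Psi0 G gam eps)"
    using False by (auto simp: Psi_def)
  have "nat (- k) = Suc (nat (- (k + 1)))" using False by simp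
  then have b: "Psi G gam eps k = Rinv G gam eps ((Rinv G gam eps ^^ nat (- (k + 1))) (Psi0 G gam eps))"
    using False by (simp add: Psi_def)
  show ?thesis unfolding a b Rop_Rinv[OF G0 g] ..
qed

lemma Psi_pred:
  assumes G0: "fps_nth G 0 = 1" and g: "gam \<noteq> 0"
  shows "Psi G gam eps (k - 1) = Rinv G gam eps (Psi G gam eps k)"
  using Psi_Suc[OF G0 g, of eps "k - 1"] Rinv_Rop[OF G0 g] by simp

theorem proposition5p10:
  fixes G :: "'k::field_char_0 fps" and gam :: 'k and eps :: int and m :: nat and k :: int
  assumes "fps_nth G 0 = 1" and "gam \<noteq> 0" and "eps \<in> {1, -1}" and "0 < m"
  shows "Psi G gam eps (k + int m) =
         (\<lambda>j a. fls_const (of_int eps) * fls_X * dS m (Psi G gam eps k) j a)"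
proof -
  note G0 = assms(1) and g = assms(2) and eps = assms(3) and m = assms(4)
  have P0: "Psi G gam eps 0 = Psi0 G gam eps" by (simp add: Psi_def)
  have base0: "Psi G gam eps (0 + int m) = scl eps (dS m (Psi G gam eps 0))"
    unfolding P0 by (rule ext, rule ext) (simp add: Psi_def scl_def main0[OF eps m])
  have "Psi G gam eps (k + int m) = scl eps (dS m (Psi G gam eps k))"
  proof (induction k rule: int_induct[where k=0])
    case base
    show ?case using base0 by simp
  next
    case (step1 i)
    have "Psi G gam eps (i + 1 + int m) = Psi G gam eps ((i + int m) + 1)" by (simp add: algebra_simps)
    also have "\<dots> = Rop G gam eps (Psi G gam eps (i + int m))" by (rule Psi_Suc[OF G0 g])
    also have "\<dots> = scl eps (dS m (Rop G gam eps (Psi G gam eps i)))"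
      by (simp add: step1.IH scl_Rop dS_Rop)
    also have "\<dots> = scl eps (dS m (Psi G gam eps (i + 1)))" by (simp add: Psi_Suc[OF G0 g])
    finally show ?case .
  next
    case (step2 i)
    have "Psi G gam eps (i - 1 + int m) = Psi G gam eps ((i + int m) - 1)" by (simp add: algebra_simps)
    also have "\<dots> = Rinv G gam eps (Psi G gam eps (i + int m))" by (rule Psi_pred[OF G0 g])
    also have "\<dots> = scl eps (dS m (Rinv G gam eps (Psi G gam eps i)))"
      by (simp add: step2.IH scl_Rinv dS_Rinv)
    also have "\<dots> = scl eps (dS m (Psi G gam eps (i - 1)))" by (simp add: Psi_pred[OF G0 g])
    finally show ?case .
  qed
  then show ?thesis by (simp add: scl_def)
qed


end
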